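(* Assume the standing setting below. Let $\alpha\in(0,1/6]$, $\gamma\in(\alpha,1-2\alpha]$ with $\alpha n,\gamma n$ integers, let $P_1,P_2,P_3\subseteq X$ be pairwise disjoint with $|P_1|=|P_2|=\alpha n$ and $|P_3|=\gamma n$, let $T\subseteq X$ be nonempty, let $\tau>0$, and set $\psi:=\frac1{3\alpha}R_{2\alpha(k+1)\phi_\alpha}(P_2,T)$. Let $F_c:=\mathrm{far}_{4(k+1)\phi_\alpha}(X\setminus P_1,T)$, let $\mathcal{B}_c$ be a $(\phi_\alpha/3)$-linear bin division of $(X\setminus P_1)\setminus F_c$ with respect to $T$, and let $F_d:=\mathrm{far}_{5(k+1)\phi_\alpha}(X\setminus P_1,T)$. Suppose each of $F_c$ and $\mathcal{B}_c$ is trivial or well-represented in $P_2$ for $X\setminus P_1$, and $F_d$ is trivial or well-represented in $P_3$ for $X\setminus P_1$. Let $N:=|\{x\in P_3:\rho(x,T)>\psi/(k\tau)\}|$. Then $$N\le 8(k+1)\phi_\alpha\frac{\gamma}{1-\alpha}+9k\tau.$$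
   Context: Standing setting: $(X,\rho)$ is a finite metric space with $|X|=n$; $k\ge2$ is an integer and $\delta\in(0,1)$; $\log$ is the natural logarithm; for $\alpha>0$, $\phi_\alpha:=150\log(32k/\delta)/\alpha$. For nonempty $T\subseteq X$, $\rho(x,T):=\min_{y\in T}\rho(x,y)$ and $R(S,T):=\sum_{x\in S}\rho(x,T)$; ties are broken by a fixed ordering of $X$. For $S\subseteq X$ and real $r\ge0$, $\mathrm{far}_r(S,T)$ is the set of the $\lceil r\rceil$ points of $S$ furthest from $T$; if $|S|<r$, $\mathrm{far}_r(S,T):=S$ (trivial far set). $R_r(S,T):=R(S\setminus\mathrm{far}_r(S,T),T)$. For finite $W$, $A,B\subseteq W$, $B$ is well-represented in $A$ for $W$ if $|B\cap A|/|B|\in[r/2,\frac32 r]$ with $r=|A|/|W|$; a bin division is well-represented if all its bins are. A $z$-linear bin division ($z>0$) of $W$ with respect to $T$ is a partition $(\mathcal{B}(1),\ldots,\mathcal{B}(L))$ of $W$ with: (1) if $z\le|W|$, $|\mathcal{B}(i)|\ge z(i+1)/2$ for all $i$; otherwise it is trivial, $\mathcal{B}(1):=W$; (2) $|\mathcal{B}(1)|\le\frac52 z$; (3) $|\mathcal{B}(i+1)|/|\mathcal{B}(i)|\le3/2$; (4) $\rho(x,T)\ge\rho(x',T)$ whenever $x\in\mathcal{B}(i)$, $x'\in\mathcal{B}(i+1)$. *)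

theory Defs
  imports Complex_Main
begin

definition finite_metric :: "'a set \<Rightarrow> ('a \<Rightarrow> 'a \<Rightarrow> real) \<Rightarrow> bool" where
  "finite_metric X \<rho> \<longleftrightarrow> finite X \<and>
     (\<forall>x\<in>X. \<forall>y\<in>X. \<rho> x y \<ge> 0 \<and> (\<rho> x y = 0 \<longleftrightarrow> x = y) \<and> \<rho> x y = \<rho> y x) \<and>
     (\<forall>x\<in>X. \<forall>y\<in>X. \<forall>z\<in>X. \<rho> x z \<le> \<rho> x y + \<rho> y z)"

definition distT :: "('a \<Rightarrow> 'a \<Rightarrow> real) \<Rightarrow> 'a \<Rightarrow> 'a set \<Rightarrow> real" where
  "distT \<rho> x T = Min ((\<lambda>y. \<rho> x y) ` T)"

definition RR :: "('a \<Rightarrow> 'a \<Rightarrow> real) \<Rightarrow> 'a set \<Rightarrow> 'a set \<Rightarrow> real" where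
  "RR \<rho> S T = (\<Sum>x\<in>S. distT \<rho> x T)"

definition further :: "('a::linorder \<Rightarrow> 'a \<Rightarrow> real) \<Rightarrow> 'a set \<Rightarrow> 'a \<Rightarrow> 'a \<Rightarrow> bool" where
  "further \<rho> T x y \<longleftrightarrow> distT \<rho> x T > distT \<rho> y T \<or> (distT \<rho> x T = distT \<rho> y T \<and> x < y)"

text \<open>far_r(S,T): the ceil(r) points of S furthest from T; S itself if |S| < r.\<close>
definition far :: "('a::linorder \<Rightarrow> 'a \<Rightarrow> real) \<Rightarrow> real \<Rightarrow> 'a set \<Rightarrow> 'a set \<Rightarrow> 'a set" where
  "far \<rho> r S T = (if real (card S) < r then S
     else {x\<in>S. card {y\<in>S. further \<rho> T y x} < nat \<lceil>r\<rceil>})"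

definition far_trivial :: "real \<Rightarrow> 'a set \<Rightarrow> bool" where
  "far_trivial r S \<longleftrightarrow> real (card S) < r"

definition RR_r :: "('a::linorder \<Rightarrow> 'a \<Rightarrow> real) \<Rightarrow> real \<Rightarrow> 'a set \<Rightarrow> 'a set \<Rightarrow> real" where
  "RR_r \<rho> r S T = RR \<rho> (S - far \<rho> r S T) T"

definition well_represented :: "'a set \<Rightarrow> 'a set \<Rightarrow> 'a set \<Rightarrow> bool" where
  "well_represented W A B \<longleftrightarrow>
     (let r = real (card A) / real (card W);
          q = real (card (B \<inter> A)) / real (card B)
      in r / 2 \<le> q \<and> q \<le> 3 / 2 * r)"

definition bins_well_represented :: "'a set \<Rightarrow> 'a set \<Rightarrow> 'a set list \<Rightarrow> bool" where
  "bins_well_represented W A Bs \<longleftrightarrow> (\<forall>B\<in>set Bs. well_represented W A B)"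

text \<open>z-linear bin division of W w.r.t. T, as a list of bins; list index j
  corresponds to bin B(j+1) of the paper.\<close>
definition linear_bin_division ::
  "('a \<Rightarrow> 'a \<Rightarrow> real) \<Rightarrow> real \<Rightarrow> 'a set \<Rightarrow> 'a set \<Rightarrow> 'a set list \<Rightarrow> bool" where
  "linear_bin_division \<rho> z W T Bs \<longleftrightarrow>
     Bs \<noteq> [] \<and> \<Union>(set Bs) = W \<and>
     (\<forall>i<length Bs. \<forall>j<length Bs. i \<noteq> j \<longrightarrow> Bs ! i \<inter> Bs ! j = {}) \<and>
     (if z \<le> real (card W)
      then (\<forall>j<length Bs. real (card (Bs ! j)) \<ge> z * (real j + 2) / 2)
      else Bs = [W]) \<and>
     real (card (Bs ! 0)) \<le> 5 / 2 * z \<and>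
     (\<forall>j. Suc j < length Bs \<longrightarrow>
        real (card (Bs ! Suc j)) / real (card (Bs ! j)) \<le> 3 / 2) \<and>
     (\<forall>j. Suc j < length Bs \<longrightarrow>
        (\<forall>x\<in>Bs ! j. \<forall>x'\<in>Bs ! Suc j. distT \<rho> x T \<ge> distT \<rho> x' T))"

definition bin_division_trivial :: "real \<Rightarrow> 'a set \<Rightarrow> bool" where
  "bin_division_trivial z W \<longleftrightarrow> \<not> (z \<le> real (card W))"

definition phi :: "nat \<Rightarrow> real \<Rightarrow> real \<Rightarrow> real" where
  "phi k \<delta> \<alpha> = 150 * ln (32 * real k / \<delta>) / \<alpha>"

end

theory Submission
  imports Defs
begin


lemma further_irrefl: "\<not> further \<rho> T x x"
  by (auto simp: further_def)
lemma further_trans: "further \<rho> T x y \<Longrightarrow> further \<rho> T y z \<Longrightarrow> further \<rho> T x z"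
  by (auto simp: further_def)
lemma further_total: "x \<noteq> y \<Longrightarrow> further \<rho> T x y \<or> further \<rho> T y x"
  by (auto simp: further_def)
lemma further_dist: "further \<rho> T x y \<Longrightarrow> distT \<rho> y T \<le> distT \<rho> x T"
  by (auto simp: further_def)

definition rk where "rk \<rho> T S x = card {y\<in>S. further \<rho> T y x}"

lemma rk_less:
  assumes "finite S" "further \<rho> T x y" "x \<in> S"
  shows "rk \<rho> T S x < rk \<rho> T S y"
proof -
  have "{z\<in>S. further \<rho> T z x} \<subset> {z\<in>S. further \<rho> T z y}"
    using assms further_trans[of \<rho> T _ x y] further_irrefl[of \<rho> T x] by blast
  thus ?thesis unfolding rk_def using assms(1) by (simp add: psubset_card_mono)
qed

lemma rk_bound:
  assumes "finite S" "x \<in> S"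
  shows "rk \<rho> T S x < card S"
proof -
  have "{z\<in>S. further \<rho> T z x} \<subset> S"
    using assms further_irrefl[of \<rho> T x] by blast
  thus ?thesis unfolding rk_def using assms(1) by (simp add: psubset_card_mono)
qed

lemma rk_inj:
  assumes "finite S" shows "inj_on (rk \<rho> T S) S"
proof (rule inj_onI)
  fix x y assume "x \<in> S" "y \<in> S" "rk \<rho> T S x = rk \<rho> T S y"
  thus "x = y" using rk_less[OF assms, of \<rho> T x y] rk_less[OF assms, of \<rho> T y x]
      further_total[of x y \<rho> T] by force
qed

lemma rk_image:
  assumes "finite S" shows "rk \<rho> T S ` S = {..<card S}"
proof -
  have "rk \<rho> T S ` S \<subseteq> {..<card S}" using rk_bound[OF assms] by auto
  moreover have "card (rk \<rho> T S ` S) = card {..<card S}"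
    using card_image[OF rk_inj[OF assms]] by simp
  ultimately show ?thesis by (simp add: card_subset_eq)
qed

lemma far_nontriv:
  "\<not> real (card S) < r \<Longrightarrow> far \<rho> r S T = {x\<in>S. rk \<rho> T S x < nat \<lceil>r\<rceil>}"
  by (simp add: far_def rk_def)

lemma far_card:
  assumes "finite S" "r \<le> real (card S)"
  shows "card (far \<rho> r S T) = nat \<lceil>r\<rceil>"
proof -
  let ?N = "nat \<lceil>r\<rceil>"
  have N: "?N \<le> card S" using assms(2)
    by (metis ceiling_le_iff ceiling_of_nat nat_le_iff of_int_of_nat_eq)
  have F: "far \<rho> r S T = {x\<in>S. rk \<rho> T S x < ?N}" using far_nontriv[of S r \<rho> T] assms(2) by simp
  have "rk \<rho> T S ` {x\<in>S. rk \<rho> T S x < ?N} = rk \<rho> T S ` S \<inter> {..<?N}" by auto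
  also have "\<dots> = {..<card S} \<inter> {..<?N}"
    using rk_image[OF assms(1), of \<rho> T] by simp
  also have "\<dots> = {..<?N}" by (metis N Int_absorb1 Int_commute lessThan_subset_iff)
  finally have "rk \<rho> T S ` {x\<in>S. rk \<rho> T S x < ?N} = {..<?N}" .
  moreover have "inj_on (rk \<rho> T S) {x\<in>S. rk \<rho> T S x < ?N}"
    using rk_inj[OF assms(1)] by (rule inj_on_subset) auto
  ultimately have "card {x\<in>S. rk \<rho> T S x < ?N} = card {..<?N}"
    by (metis card_image)
  thus ?thesis using F by simp
qed

lemma far_subset: "far \<rho> r S T \<subseteq> S"
  by (auto simp: far_def)

lemma far_top:
  assumes "finite S" "y \<in> far \<rho> r S T" "x \<in> S" "x \<notin> far \<rho> r S T"
  shows "further \<rho> T y x"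
proof -
  have nt: "\<not> real (card S) < r" using assms by (auto simp: far_def split: if_splits)
  hence F: "far \<rho> r S T = {x\<in>S. rk \<rho> T S x < nat \<lceil>r\<rceil>}" by (rule far_nontriv)
  have "x \<noteq> y" using assms by auto
  moreover have "\<not> further \<rho> T x y"
    using rk_less[OF assms(1), of \<rho> T x y] assms F by auto
  ultimately show ?thesis using further_total by metis
qed

lemma far_mono:
  assumes "r1 \<le> r2" shows "far \<rho> r1 S T \<subseteq> far \<rho> r2 S T"
proof -
  have NN: "nat \<lceil>r1\<rceil> \<le> nat \<lceil>r2\<rceil>" using assms by (intro nat_mono ceiling_mono)
  show ?thesis
  proof (cases "real (card S) < r2")
    case True thus ?thesis unfolding far_def by auto
  next
    case False
    hence "\<not> real (card S) < r1" using assms by auto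
    thus ?thesis using False unfolding far_def using NN by (auto intro: less_le_trans)
  qed
qed

lemma card_ge_ceil:
  assumes "x \<le> real c" shows "nat \<lceil>x\<rceil> \<le> c"
  using assms by (metis ceiling_le_iff ceiling_of_nat nat_le_iff of_int_of_nat_eq)

lemma distT_nonneg:
  assumes "finite_metric X \<rho>" "T \<subseteq> X" "T \<noteq> {}" "x \<in> X"
  shows "0 \<le> distT \<rho> x T"
proof -
  have "finite T" using assms(1,2) finite_subset unfolding finite_metric_def by blast
  thus ?thesis unfolding distT_def using assms unfolding finite_metric_def
    by (subst Min_ge_iff) auto
qed



lemma prefix_sum_bound:
  fixes b :: "nat \<Rightarrow> real"
  assumes "b 0 \<le> 5/2*z" "\<forall>j. Suc j < L \<longrightarrow> b (Suc j) \<le> 3/2 * b j"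
  shows "j < L \<Longrightarrow> 2 * b j \<le> (\<Sum>i<j. b i) + 5*z"
proof (induction j)
  case 0 thus ?case using assms(1) by simp
next
  case (Suc j)
  hence "2 * b j \<le> (\<Sum>i<j. b i) + 5*z" by simp
  moreover have "b (Suc j) \<le> 3/2 * b j" using assms(2) Suc.prems by blast
  ultimately show ?case by simp
qed

lemma chain:
  fixes g :: "'a \<Rightarrow> real"
  assumes ne: "\<forall>j<length Bs. Bs!j \<noteq> {}"
    and ord: "\<forall>j. Suc j < length Bs \<longrightarrow> (\<forall>x\<in>Bs!j. \<forall>x'\<in>Bs!Suc j. g x' \<le> g x)"
  shows "i < j \<Longrightarrow> j < length Bs \<Longrightarrow> x \<in> Bs!i \<Longrightarrow> y \<in> Bs!j \<Longrightarrow> g y \<le> g x"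
proof (induction j arbitrary: y)
  case 0 thus ?case by simp
next
  case (Suc j)
  show ?case
  proof (cases "i = j")
    case True thus ?thesis using ord Suc.prems by blast
  next
    case False
    hence "i < j" using Suc.prems by simp
    obtain w where w: "w \<in> Bs!j" using ne Suc.prems by fastforce
    have "g w \<le> g x" using Suc.IH[OF \<open>i<j\<close> _ Suc.prems(3) w] Suc.prems by simp
    moreover have "g y \<le> g w" using ord Suc.prems w by blast
    ultimately show ?thesis by simp
  qed
qed

lemma bins_lemma:
  fixes Bs :: "'a set list" and g :: "'a \<Rightarrow> real"
  assumes fin: "\<forall>B\<in>set Bs. finite B"
   and disj: "\<forall>i<length Bs. \<forall>j<length Bs. i\<noteq>j \<longrightarrow> Bs!i \<inter> Bs!j = {}"
   and ne: "\<forall>j<length Bs. Bs!j \<noteq> {}"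
   and first: "Bs \<noteq> [] \<Longrightarrow> real (card (Bs!0)) \<le> 5/2*z"
   and ratio: "\<forall>j. Suc j < length Bs \<longrightarrow> real (card (Bs!Suc j)) \<le> 3/2 * real(card (Bs!j))"
   and ord: "\<forall>j. Suc j < length Bs \<longrightarrow> (\<forall>x\<in>Bs!j. \<forall>x'\<in>Bs!Suc j. g x' \<le> g x)"
   and rep: "\<forall>B\<in>set Bs. c * real(card B) \<le> real(card(B \<inter> P))"
   and z: "z \<ge> 0"
  shows "\<exists>Q. Q \<subseteq> \<Union>(set Bs) \<inter> {x. g x > t} \<and> c * real(card Q) \<le> real (card (Q\<inter>P)) \<and>
     real(card(\<Union>(set Bs) \<inter> {x. g x > t})) \<le> 3/2*real(card Q) + 5/2*z"
proof -
  define L where "L = length Bs"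
  define Sg where "Sg = {x. g x > t}"
  define b where "b = (\<lambda>i. real (card (Bs!i)))"
  define j where "j = (if \<exists>i<L. \<not> Bs!i \<subseteq> Sg then LEAST i. i<L \<and> \<not> Bs!i \<subseteq> Sg else L)"
  have jL: "j \<le> L"
  proof (cases "\<exists>i<L. \<not> Bs!i \<subseteq> Sg")
    case True
    then obtain i where i: "i<L \<and> \<not> Bs!i \<subseteq> Sg" by blast
    have "(LEAST i. i<L \<and> \<not> Bs!i \<subseteq> Sg) \<le> i" by (rule Least_le) (rule i)
    thus ?thesis unfolding j_def using True i by simp
  next
    case False
    have "j = L" unfolding j_def using False by (rule if_not_P)
    thus ?thesis by simp
  qed
  have pre: "\<forall>i<j. Bs!i \<subseteq> Sg"
  proof (cases "\<exists>i<L. \<not> Bs!i \<subseteq> Sg")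
    case True
    show ?thesis
    proof (intro allI impI)
      fix i assume "i < j"
      hence "i < (LEAST i. i<L \<and> \<not> Bs!i \<subseteq> Sg)" unfolding j_def using True by simp
      hence "\<not> (i<L \<and> \<not> Bs!i \<subseteq> Sg)" by (rule not_less_Least)
      moreover have "i < L" using \<open>i<j\<close> jL by simp
      ultimately show "Bs!i \<subseteq> Sg" by simp
    qed
  next
    case False
    have "j = L" unfolding j_def using False by (rule if_not_P)
    thus ?thesis using False by auto
  qed
  have jnot: "j < L \<Longrightarrow> \<not> Bs!j \<subseteq> Sg"
  proof -
    assume "j < L"
    have ex: "\<exists>i<L. \<not> Bs!i \<subseteq> Sg"
    proof (rule ccontr)
      assume nex: "\<not> (\<exists>i<L. \<not> Bs!i \<subseteq> Sg)"
      have "j = L" unfolding j_def using nex by (rule if_not_P)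
      with \<open>j < L\<close> show False by simp
    qed
    have "j = (LEAST i. i<L \<and> \<not> Bs!i \<subseteq> Sg)" unfolding j_def using ex by (rule if_P)
    thus ?thesis using LeastI_ex[OF ex] by simp
  qed
  define Q where "Q = (\<Union>i<j. Bs!i)"
  have finB: "\<And>i. i < L \<Longrightarrow> finite (Bs!i)" using fin L_def by simp
  have disjI: "\<And>i i'. i\<in>{..<j} \<Longrightarrow> i'\<in>{..<j} \<Longrightarrow> i \<noteq> i' \<Longrightarrow> Bs!i \<inter> Bs!i' = {}"
    using disj jL L_def by auto
  have cardQ: "card Q = (\<Sum>i<j. card (Bs!i))"
    unfolding Q_def by (rule card_UN_disjoint) (use finB jL disjI in auto)
  have QP: "Q \<inter> P = (\<Union>i<j. Bs!i \<inter> P)" unfolding Q_def by auto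
  have cardQP: "card (Q \<inter> P) = (\<Sum>i<j. card (Bs!i \<inter> P))"
    unfolding QP by (rule card_UN_disjoint) (use finB jL disjI in auto)
  have repQ: "c * real (card Q) \<le> real (card (Q \<inter> P))"
  proof -
    have "c * real (card Q) = (\<Sum>i<j. c * real (card (Bs!i)))"
      by (simp add: cardQ sum_distrib_left)
    also have "\<dots> \<le> (\<Sum>i<j. real (card (Bs!i \<inter> P)))"
      by (rule sum_mono) (use rep jL L_def in auto)
    also have "\<dots> = real (card (Q \<inter> P))" by (simp add: cardQP)
    finally show ?thesis .
  qed
  have mem: "\<forall>i<j. Bs!i \<in> set Bs" using jL L_def by auto
  have Qsub: "Q \<subseteq> \<Union>(set Bs) \<inter> Sg"
    using pre mem unfolding Q_def by blast
  have finU: "finite (\<Union>(set Bs))" using fin by auto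
  have finQ: "finite Q" using Qsub finU finite_subset by blast
  have bound: "real(card(\<Union>(set Bs) \<inter> Sg)) \<le> 3/2*real(card Q) + 5/2*z"
  proof (cases "j < L")
    case False
    hence "j = L" using jL by simp
    hence "\<Union>(set Bs) \<inter> Sg \<subseteq> Q" unfolding Q_def L_def by (auto simp: set_conv_nth)
    hence "card (\<Union>(set Bs) \<inter> Sg) \<le> card Q" by (rule card_mono[rotated]) (use finQ in auto)
    thus ?thesis using z by simp
  next
    case True
    obtain x where x: "x \<in> Bs!j" "\<not> g x > t" using jnot[OF True] Sg_def by auto
    have "\<Union>(set Bs) \<inter> Sg \<subseteq> Q \<union> Bs!j"
    proof
      fix y assume y: "y \<in> \<Union>(set Bs) \<inter> Sg"
      then obtain i where i: "i < L" "y \<in> Bs!i" by (auto simp: set_conv_nth L_def)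
      have "\<not> j < i"
      proof
        assume "j < i"
        hence "g y \<le> g x" using chain[OF ne ord, of j i x y] i x L_def by simp
        thus False using y x Sg_def by auto
      qed
      thus "y \<in> Q \<union> Bs!j" using i unfolding Q_def
        by (cases "i = j") auto
    qed
    hence "card (\<Union>(set Bs) \<inter> Sg) \<le> card (Q \<union> Bs!j)"
      by (rule card_mono[rotated]) (use finQ finB True in auto)
    also have "\<dots> \<le> card Q + card (Bs!j)" by (rule card_Un_le)
    finally have c1: "real (card (\<Union>(set Bs) \<inter> Sg)) \<le> real (card Q) + b j"
      unfolding b_def by linarith
    have Bsne: "Bs \<noteq> []" using True L_def by auto
    have "2 * b j \<le> (\<Sum>i<j. b i) + 5*z"
      by (rule prefix_sum_bound[of b z L]) (use first[OF Bsne] ratio True in \<open>auto simp: b_def L_def\<close>)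
    moreover have "(\<Sum>i<j. b i) = real (card Q)" by (simp add: cardQ b_def)
    ultimately show ?thesis using c1 by simp
  qed
  show ?thesis using Qsub repQ bound unfolding Sg_def by blast
qed



lemma nat_ceil_bounds:
  fixes x :: real assumes "0 \<le> x"
  shows "x \<le> real (nat \<lceil>x\<rceil>)" "real (nat \<lceil>x\<rceil>) < x + 1"
proof -
  have "0 \<le> \<lceil>x\<rceil>" using assms by simp
  hence e: "real (nat \<lceil>x\<rceil>) = of_int \<lceil>x\<rceil>" by simp
  show "x \<le> real (nat \<lceil>x\<rceil>)" unfolding e by simp
  show "real (nat \<lceil>x\<rceil>) < x + 1" unfolding e using ceiling_correct[of x] by linarith
qed

lemma phi_ge1:
  assumes "k \<ge> 2" "0 < \<delta>" "\<delta> < 1" "0 < \<alpha>" "\<alpha> \<le> 1/6"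
  shows "1 \<le> phi k \<delta> \<alpha>"
proof -
  have x: "32 * real k / \<delta> \<ge> 64" using assms by (simp add: field_simps)
  have "ln (\<delta> / (32 * real k)) \<le> \<delta> / (32 * real k) - 1"
    using assms by (intro ln_le_minus_one) simp
  moreover have "ln (\<delta> / (32 * real k)) = - ln (32 * real k / \<delta>)"
    using assms by (simp add: ln_div)
  moreover have "\<delta> / (32 * real k) \<le> 1/64" using assms by (simp add: field_simps)
  ultimately have l: "ln (32 * real k / \<delta>) \<ge> 1/2" by linarith
  have "1 \<le> 150 * ln (32 * real k / \<delta>) / \<alpha>"
    using l assms by (simp add: field_simps)
  thus ?thesis unfolding phi_def .
qed

theorem lemma9:
  fixes X :: "'a::linorder set" and \<rho> :: "'a \<Rightarrow> 'a \<Rightarrow> real"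
    and k :: nat and \<delta> \<alpha> \<gamma> \<tau> :: real
    and P1 P2 P3 T :: "'a set" and Bc :: "'a set list"
  assumes metric: "finite_metric X \<rho>"
    and k: "k \<ge> 2" and \<delta>: "0 < \<delta>" "\<delta> < 1"
    and \<alpha>: "0 < \<alpha>" "\<alpha> \<le> 1 / 6"
    and \<gamma>: "\<alpha> < \<gamma>" "\<gamma> \<le> 1 - 2 * \<alpha>"
    and int_an: "\<alpha> * real (card X) \<in> \<int>" and int_gn: "\<gamma> * real (card X) \<in> \<int>"
    and P: "P1 \<subseteq> X" "P2 \<subseteq> X" "P3 \<subseteq> X"
    and disj: "P1 \<inter> P2 = {}" "P1 \<inter> P3 = {}" "P2 \<inter> P3 = {}"
    and card_P: "real (card P1) = \<alpha> * real (card X)" "real (card P2) = \<alpha> * real (card X)"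
      "real (card P3) = \<gamma> * real (card X)"
    and T: "T \<subseteq> X" "T \<noteq> {}"
    and \<tau>: "\<tau> > 0"
    and Bc: "linear_bin_division \<rho> (phi k \<delta> \<alpha> / 3)
               ((X - P1) - far \<rho> (4 * (real k + 1) * phi k \<delta> \<alpha>) (X - P1) T) T Bc"
    and Fc_wr: "far_trivial (4 * (real k + 1) * phi k \<delta> \<alpha>) (X - P1) \<or>
               well_represented (X - P1) P2 (far \<rho> (4 * (real k + 1) * phi k \<delta> \<alpha>) (X - P1) T)"
    and Bc_wr: "bin_division_trivial (phi k \<delta> \<alpha> / 3)
                 ((X - P1) - far \<rho> (4 * (real k + 1) * phi k \<delta> \<alpha>) (X - P1) T) \<or>
               bins_well_represented (X - P1) P2 Bc"
    and Fd_wr: "far_trivial (5 * (real k + 1) * phi k \<delta> \<alpha>) (X - P1) \<or>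
               well_represented (X - P1) P3 (far \<rho> (5 * (real k + 1) * phi k \<delta> \<alpha>) (X - P1) T)"
  shows "real (card {x\<in>P3. distT \<rho> x T >
            (1 / (3 * \<alpha>) * RR_r \<rho> (2 * \<alpha> * (real k + 1) * phi k \<delta> \<alpha>) P2 T) / (real k * \<tau>)})
         \<le> 8 * (real k + 1) * phi k \<delta> \<alpha> * (\<gamma> / (1 - \<alpha>)) + 9 * real k * \<tau>"
proof -
  have finX: "finite X" using metric unfolding finite_metric_def by blast
  define n where "n = card X"
  define W where "W = X - P1"
  define \<phi> where "\<phi> = phi k \<delta> \<alpha>"
  define m where "m = (real k + 1) * \<phi>"
  define f where "f = (\<lambda>x. distT \<rho> x T)"
  have e4: "4 * (real k + 1) * phi k \<delta> \<alpha> = 4*m" by (simp add: m_def \<phi>_def)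
  have e5: "5 * (real k + 1) * phi k \<delta> \<alpha> = 5*m" by (simp add: m_def \<phi>_def)
  have e2: "2 * \<alpha> * (real k + 1) * phi k \<delta> \<alpha> = 2*\<alpha>*m" by (simp add: m_def \<phi>_def)
  have e8: "8 * (real k + 1) * phi k \<delta> \<alpha> = 8*m" by (simp add: m_def \<phi>_def)
  define Fc where "Fc = far \<rho> (4*m) W T"
  define Fd where "Fd = far \<rho> (5*m) W T"
  define F2 where "F2 = far \<rho> (2*\<alpha>*m) P2 T"
  define R where "R = RR \<rho> (P2 - F2) T"
  define t where "t = (1 / (3 * \<alpha>) * R) / (real k * \<tau>)"
  define G where "G = {x\<in>P3. f x > t}"
  have phi1: "1 \<le> \<phi>" unfolding \<phi>_def using phi_ge1 k \<delta> \<alpha> by blast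
  have kr: "2 \<le> real k" using k by simp
  have m3: "3 * \<phi> \<le> m" unfolding m_def using kr phi1 by (simp add: algebra_simps)
  have finW: "finite W" using finX W_def by simp
  have WX: "W \<subseteq> X" using W_def by auto
  have P2W: "P2 \<subseteq> W" "P3 \<subseteq> W" using P disj W_def by auto
  have fnn: "\<And>x. x \<in> X \<Longrightarrow> 0 \<le> f x" unfolding f_def using distT_nonneg[OF metric T] by blast
  have cardW: "real (card W) = (1 - \<alpha>) * real n"
  proof -
    have "card W = card X - card P1" unfolding W_def using finX P(1) finite_subset
      by (metis card_Diff_subset)
    moreover have "card P1 \<le> card X" using finX P(1) by (simp add: card_mono)
    ultimately have "real (card W) = real (card X) - real (card P1)" by simp
    thus ?thesis using card_P(1) n_def by (simp add: algebra_simps)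
  qed
  have \<alpha>1: "0 < 1 - \<alpha>" using \<alpha> by simp
  have \<gamma>0: "0 < \<gamma>" using \<alpha> \<gamma> by simp
  have main: "real (card G) \<le> 8*m*(\<gamma>/(1-\<alpha>)) + 9 * real k * \<tau>"
  proof (cases "real (card W) < 5*m")
    case True
    have "G \<subseteq> P3" unfolding G_def by auto
    hence "card G \<le> card P3" using finX P(3) finite_subset by (metis card_mono)
    hence "real (card G) \<le> \<gamma> * real n" using card_P(3) n_def by simp
    moreover have "\<gamma> * real n * (1-\<alpha>) \<le> 8*m*\<gamma>"
    proof -
      have "(1-\<alpha>) * real n < 5*m" using True cardW by simp
      hence "\<gamma> * ((1-\<alpha>) * real n) \<le> \<gamma> * (5*m)" using \<gamma>0 by simp
      moreover have "\<gamma> * (5*m) \<le> \<gamma> * (8*m)" using \<gamma>0 m3 phi1 by simp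
      ultimately show ?thesis by (simp add: algebra_simps)
    qed
    hence "\<gamma> * real n \<le> 8*m*(\<gamma>/(1-\<alpha>))" using \<alpha>1 by (simp add: field_simps)
    moreover have "0 \<le> 9 * real k * \<tau>" using \<tau> by simp
    ultimately show ?thesis by linarith
  next
    case False
    have mnn: "0 \<le> m" using m3 phi1 by simp
    have hW4: "\<not> real (card W) < 4*m" using False mnn by simp
    have cFc: "card Fc = nat \<lceil>4*m\<rceil>" unfolding Fc_def using far_card finW hW4 by (simp add: not_less)
    have cFd: "card Fd = nat \<lceil>5*m\<rceil>" unfolding Fd_def using far_card finW False by (simp add: not_less)
    have cFc1: "4*m \<le> real (card Fc)" "real (card Fc) < 4*m + 1"
      unfolding cFc using nat_ceil_bounds[of "4*m"] mnn by auto
    have cFd1: "5*m \<le> real (card Fd)" "real (card Fd) < 5*m + 1"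
      unfolding cFd using nat_ceil_bounds[of "5*m"] mnn by auto
    have FcFd: "Fc \<subseteq> Fd" unfolding Fc_def Fd_def using mnn by (intro far_mono) simp
    have FdW: "Fd \<subseteq> W" "Fc \<subseteq> W" unfolding Fd_def Fc_def by (rule far_subset)+
    have "0 < (1-\<alpha>) * real n" using cardW False m3 phi1 by linarith
    hence npos: "0 < real n" using \<alpha>1 by (simp add: zero_less_mult_iff)
    have cWpos: "0 < real (card W)" using cardW npos \<alpha>1 by simp
    have wrFc: "well_represented W P2 Fc"
      using Fc_wr hW4 unfolding far_trivial_def e4 W_def Fc_def by blast
    have wrFd: "well_represented W P3 Fd"
      using Fd_wr False unfolding far_trivial_def e5 W_def Fd_def by blast
    have r3: "real (card P3) / real (card W) = \<gamma> / (1-\<alpha>)"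
      unfolding cardW card_P(3)[folded n_def] using npos \<alpha>1 by (simp add: field_simps)
    have r2: "real (card P2) / real (card W) = \<alpha> / (1-\<alpha>)"
      unfolding cardW card_P(2)[folded n_def] using npos \<alpha>1 by (simp add: field_simps)
    have r2a: "\<alpha> \<le> \<alpha> / (1-\<alpha>)" using \<alpha> \<alpha>1 by (simp add: field_simps)
    have cFdpos: "0 < real (card Fd)" using cFd1 m3 phi1 by simp
    have hFd3: "real (card (Fd \<inter> P3)) \<le> 8*m*(\<gamma>/(1-\<alpha>))"
    proof -
      have "real (card (Fd \<inter> P3)) / real (card Fd) \<le> 3/2 * (\<gamma> / (1-\<alpha>))"
        using wrFd r3 unfolding well_represented_def Let_def by simp
      hence "real (card (Fd \<inter> P3)) \<le> 3/2 * (\<gamma> / (1-\<alpha>)) * real (card Fd)"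
        using cFdpos by (simp add: divide_le_eq)
      also have "\<dots> \<le> 3/2 * (\<gamma> / (1-\<alpha>)) * (5*m+1)"
        using cFd1 \<gamma>0 \<alpha>1 by (intro mult_left_mono) auto
      also have "\<dots> = (\<gamma> / (1-\<alpha>)) * (3/2*(5*m+1))" by (simp only: mult.commute mult.left_commute)
      also have "\<dots> \<le> (\<gamma> / (1-\<alpha>)) * (8*m)"
        using m3 phi1 \<gamma>0 \<alpha>1 by (intro mult_left_mono) auto
      finally show ?thesis by (simp add: mult_ac)
    qed
    have Rnn: "0 \<le> R" unfolding R_def RR_def using fnn P(2) unfolding f_def
      by (intro sum_nonneg) auto
    have tnn: "0 \<le> t" unfolding t_def using Rnn \<alpha> \<tau> by simp
    have Rt: "R = 3 * \<alpha> * real k * \<tau> * t" unfolding t_def using \<alpha> \<tau> kr by (simp add: field_simps)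
    have claim: "real (card (G - Fd)) \<le> 9 * real k * \<tau>"
    proof (rule ccontr)
      assume "\<not> ?thesis"
      hence hM: "9 * real k * \<tau> < real (card (G - Fd))" by simp
      have kt: "0 < 9 * real k * \<tau>" using kr \<tau> by simp
      have "0 < real (card (G - Fd))" using hM kt by linarith
      hence "card (G - Fd) \<noteq> 0" by simp
      hence "G - Fd \<noteq> {}" by (metis card.empty)
      then obtain x0 where x0: "x0 \<in> G" "x0 \<notin> Fd" by blast
      have x0W: "x0 \<in> W" using x0 P2W unfolding G_def by auto
      have x0t: "t < f x0" using x0 unfolding G_def by auto
      have FdS: "\<And>y. y \<in> Fd \<Longrightarrow> t < f y"
      proof -
        fix y assume yF: "y \<in> Fd"
        have "further \<rho> T y x0"
          using far_top[OF finW yF[unfolded Fd_def] x0W] x0(2) unfolding Fd_def by blast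
        hence "f x0 \<le> f y" unfolding f_def by (rule further_dist)
        thus "t < f y" using x0t by simp
      qed
      define V where "V = W - Fc"
      define D where "D = Fd - Fc"
      have finV: "finite V" using finW V_def by simp
      have finFd: "finite Fd" using finite_subset[OF FdW(1) finW] .
      have finFc: "finite Fc" using finite_subset[OF FdW(2) finW] .
      have cD: "m - 1 \<le> real (card D)"
      proof -
        have "card D = card Fd - card Fc" unfolding D_def by (rule card_Diff_subset[OF finFc FcFd])
        moreover have "card Fc \<le> card Fd" by (rule card_mono[OF finFd FcFd])
        ultimately have "real (card D) = real (card Fd) - real (card Fc)" by simp
        thus ?thesis using cFc1 cFd1 by linarith
      qed
      have DV: "D \<subseteq> V" unfolding D_def V_def using FdW by auto
      have "card D \<le> card V" by (rule card_mono[OF finV DV])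
      hence zV: "\<phi>/3 \<le> real (card V)" using cD m3 phi1 by linarith
      have nontriv: "\<not> bin_division_trivial (\<phi>/3) V"
        unfolding bin_division_trivial_def using zV by simp
      have bwr: "bins_well_represented W P2 Bc"
        using Bc_wr nontriv unfolding e4 W_def Fc_def V_def \<phi>_def by blast
      have lbd: "linear_bin_division \<rho> (\<phi>/3) V T Bc"
        unfolding V_def Fc_def W_def \<phi>_def using Bc unfolding e4 .
      have lbd': "Bc \<noteq> [] \<and> \<Union>(set Bc) = V \<and>
         (\<forall>i<length Bc. \<forall>j<length Bc. i \<noteq> j \<longrightarrow> Bc ! i \<inter> Bc ! j = {}) \<and>
         (\<forall>j<length Bc. real (card (Bc ! j)) \<ge> \<phi>/3 * (real j + 2) / 2) \<and>
         real (card (Bc ! 0)) \<le> 5 / 2 * (\<phi>/3) \<and>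
         (\<forall>j. Suc j < length Bc \<longrightarrow>
            real (card (Bc ! Suc j)) / real (card (Bc ! j)) \<le> 3 / 2) \<and>
         (\<forall>j. Suc j < length Bc \<longrightarrow>
            (\<forall>x\<in>Bc ! j. \<forall>x'\<in>Bc ! Suc j. distT \<rho> x T \<ge> distT \<rho> x' T))"
        using lbd unfolding linear_bin_division_def by (simp only: zV if_True) blast
      have BU: "\<Union>(set Bc) = V" using lbd' by blast
      have Bdisj: "\<forall>i<length Bc. \<forall>j<length Bc. i \<noteq> j \<longrightarrow> Bc ! i \<inter> Bc ! j = {}" using lbd' by blast
      have Bsize: "\<forall>j<length Bc. real (card (Bc ! j)) \<ge> \<phi>/3 * (real j + 2) / 2" using lbd' by blast
      have B0: "real (card (Bc ! 0)) \<le> 5 / 2 * (\<phi>/3)" using lbd' by blast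
      have Bratio: "\<forall>j. Suc j < length Bc \<longrightarrow> real (card (Bc ! Suc j)) / real (card (Bc ! j)) \<le> 3 / 2"
        using lbd' by blast
      have Bord: "\<forall>j. Suc j < length Bc \<longrightarrow> (\<forall>x\<in>Bc ! j. \<forall>x'\<in>Bc ! Suc j. distT \<rho> x T \<ge> distT \<rho> x' T)"
        using lbd' by blast
      have Bpos: "\<forall>j<length Bc. 0 < real (card (Bc ! j))"
      proof (intro allI impI)
        fix j assume "j < length Bc"
        hence "\<phi>/3 * (real j + 2) / 2 \<le> real (card (Bc ! j))" using Bsize by blast
        moreover have "0 < \<phi>/3 * (real j + 2) / 2" using phi1 by simp
        ultimately show "0 < real (card (Bc ! j))" by linarith
      qed
      have Bne: "\<forall>j<length Bc. Bc ! j \<noteq> {}" using Bpos by fastforce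
      have Bratio': "\<forall>j. Suc j < length Bc \<longrightarrow> real (card (Bc ! Suc j)) \<le> 3/2 * real (card (Bc ! j))"
      proof (intro allI impI)
        fix j assume j: "Suc j < length Bc"
        hence "0 < real (card (Bc ! j))" using Bpos by simp
        thus "real (card (Bc ! Suc j)) \<le> 3/2 * real (card (Bc ! j))"
          using Bratio j by (simp add: divide_le_eq)
      qed
      have Bord': "\<forall>j. Suc j < length Bc \<longrightarrow> (\<forall>x\<in>Bc ! j. \<forall>x'\<in>Bc ! Suc j. f x' \<le> f x)"
        using Bord unfolding f_def by blast
      have Bfin: "\<forall>B\<in>set Bc. finite B" using BU finV by (metis Union_upper finite_subset)
      have h2: "\<alpha>/2 \<le> (\<alpha>/(1-\<alpha>))/2" by (rule divide_right_mono[OF r2a]) simp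
      have Brep: "\<forall>B\<in>set Bc. \<alpha>/2 * real (card B) \<le> real (card (B \<inter> P2))"
      proof
        fix B assume B: "B \<in> set Bc"
        then obtain i where i: "i < length Bc" "B = Bc ! i" by (metis in_set_conv_nth)
        have cB: "0 < real (card B)" using Bpos i by simp
        have "well_represented W P2 B" using bwr B unfolding bins_well_represented_def by blast
        hence "(\<alpha> / (1-\<alpha>)) / 2 \<le> real (card (B \<inter> P2)) / real (card B)"
          using r2 unfolding well_represented_def Let_def by simp
        hence "(\<alpha> / (1-\<alpha>)) / 2 * real (card B) \<le> real (card (B \<inter> P2))"
          using cB by (simp add: le_divide_eq)
        moreover have "\<alpha>/2 * real (card B) \<le> (\<alpha> / (1-\<alpha>)) / 2 * real (card B)"
          by (rule mult_right_mono[OF h2]) simp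
        ultimately show "\<alpha>/2 * real (card B) \<le> real (card (B \<inter> P2))" by linarith
      qed
      obtain Q where Q: "Q \<subseteq> \<Union>(set Bc) \<inter> {x. t < f x}" "\<alpha>/2 * real (card Q) \<le> real (card (Q \<inter> P2))"
        "real (card (\<Union>(set Bc) \<inter> {x. t < f x})) \<le> 3/2 * real (card Q) + 5/2 * (\<phi>/3)"
        using bins_lemma[where Bs=Bc and g=f and c="\<alpha>/2" and P=P2 and z="\<phi>/3" and t=t]
          Bfin Bdisj Bne B0 Bratio' Bord' Brep phi1 by auto
      define U where "U = V \<inter> {x. t < f x}"
      have QU: "Q \<subseteq> U" using Q(1) BU U_def by simp
      have cU: "real (card U) \<le> 3/2 * real (card Q) + 5/2 * (\<phi>/3)" using Q(3) BU U_def by simp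
      have finU: "finite U" using finV U_def by simp
      have GDU: "(G - Fd) \<union> D \<subseteq> U"
        using FdS FcFd P2W FdW unfolding U_def V_def D_def G_def by auto
      have "card ((G - Fd) \<union> D) = card (G - Fd) + card D"
        by (rule card_Un_disjoint) (use finite_subset[OF GDU finU] D_def in auto)
      moreover have "card ((G - Fd) \<union> D) \<le> card U" by (rule card_mono[OF finU GDU])
      ultimately have "real (card (G - Fd)) + real (card D) \<le> real (card U)" by linarith
      hence "real (card (G - Fd)) < 3/2 * real (card Q)" using cU cD m3 phi1 by linarith
      hence cQ: "6 * real k * \<tau> < real (card Q)" using hM by linarith
      have "\<alpha>/2 * (6 * real k * \<tau>) < \<alpha>/2 * real (card Q)"
        using cQ \<alpha> by (intro mult_strict_left_mono) auto
      moreover have "\<alpha>/2 * (6 * real k * \<tau>) = 3 * \<alpha> * real k * \<tau>" by simp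
      ultimately have cQP: "3 * \<alpha> * real k * \<tau> < real (card (Q \<inter> P2))" using Q(2) by linarith
      have cFcpos: "0 < real (card Fc)" using cFc1 m3 phi1 by simp
      have cFcP2: "2*\<alpha>*m \<le> real (card (Fc \<inter> P2))"
      proof -
        have "(\<alpha> / (1-\<alpha>)) / 2 \<le> real (card (Fc \<inter> P2)) / real (card Fc)"
          using wrFc r2 unfolding well_represented_def Let_def by simp
        hence "(\<alpha> / (1-\<alpha>)) / 2 * real (card Fc) \<le> real (card (Fc \<inter> P2))"
          using cFcpos by (simp add: le_divide_eq)
        moreover have "\<alpha>/2 * (4*m) \<le> (\<alpha> / (1-\<alpha>)) / 2 * (4*m)"
          by (rule mult_right_mono[OF h2]) (use mnn in simp)
        moreover have "(\<alpha> / (1-\<alpha>)) / 2 * (4*m) \<le> (\<alpha> / (1-\<alpha>)) / 2 * real (card Fc)"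
          by (rule mult_left_mono) (use cFc1 \<alpha> \<alpha>1 in auto)
        ultimately show ?thesis by simp
      qed
      have finP2: "finite P2" using finite_subset[OF P2W(1) finW] .
      have "card (Fc \<inter> P2) \<le> card P2" by (rule card_mono[OF finP2]) auto
      hence P2nt: "\<not> real (card P2) < 2*\<alpha>*m" using cFcP2 by linarith
      have F2eq: "F2 = {x\<in>P2. rk \<rho> T P2 x < nat \<lceil>2*\<alpha>*m\<rceil>}"
        unfolding F2_def by (rule far_nontriv[OF P2nt])
      have notF2: "\<And>x. x \<in> P2 \<Longrightarrow> x \<notin> Fc \<Longrightarrow> x \<notin> F2"
      proof -
        fix x assume x: "x \<in> P2" "x \<notin> Fc"
        have xW: "x \<in> W" using x P2W by auto
        have "Fc \<inter> P2 \<subseteq> {y\<in>P2. further \<rho> T y x}"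
          using far_top[OF finW _ xW] x(2) unfolding Fc_def by blast
        hence "card (Fc \<inter> P2) \<le> rk \<rho> T P2 x" unfolding rk_def
          by (rule card_mono[rotated]) (use finP2 in auto)
        hence N: "nat \<lceil>2*\<alpha>*m\<rceil> \<le> rk \<rho> T P2 x" by (rule le_trans[OF card_ge_ceil[OF cFcP2]])
        show "x \<notin> F2"
        proof
          assume "x \<in> F2"
          hence "rk \<rho> T P2 x < nat \<lceil>2*\<alpha>*m\<rceil>" unfolding F2eq by blast
          thus False using N by linarith
        qed
      qed
      have QP2: "Q \<inter> P2 \<subseteq> P2 - F2" using QU notF2 unfolding U_def V_def by blast
      have finD2: "finite (P2 - F2)" using finP2 by simp
      have "0 < 3 * \<alpha> * real k * \<tau>" using \<alpha> \<tau> kr by simp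
      hence "0 < real (card (Q \<inter> P2))" using cQP by linarith
      hence QPne: "Q \<inter> P2 \<noteq> {}" by (metis card.empty of_nat_0 less_irrefl)
      have "(\<Sum>x\<in>Q \<inter> P2. f x) \<le> (\<Sum>x\<in>P2 - F2. f x)"
        by (rule sum_mono2[OF finD2 QP2]) (use fnn P(2) in auto)
      hence R1: "(\<Sum>x\<in>Q \<inter> P2. f x) \<le> R" unfolding R_def RR_def f_def .
      have "(\<Sum>x\<in>Q \<inter> P2. t) < (\<Sum>x\<in>Q \<inter> P2. f x)"
        by (rule sum_strict_mono) (use finite_subset[OF QP2 finD2] QPne QU U_def in auto)
      moreover have "(\<Sum>x\<in>Q \<inter> P2. t) = real (card (Q \<inter> P2)) * t" by simp
      moreover have "3 * \<alpha> * real k * \<tau> * t \<le> real (card (Q \<inter> P2)) * t"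
        using cQP tnn by (intro mult_right_mono) auto
      ultimately show False using R1 Rt by linarith
    qed
    have GP3: "G \<subseteq> P3" by (auto simp: G_def)
    have "G = (G \<inter> Fd) \<union> (G - Fd)" by auto
    hence "card G \<le> card (G \<inter> Fd) + card (G - Fd)"
      by (metis card_Un_le)
    moreover have "card (G \<inter> Fd) \<le> card (Fd \<inter> P3)"
    proof (rule card_mono)
      show "finite (Fd \<inter> P3)" using finite_subset[OF FdW(1) finW] by simp
      show "G \<inter> Fd \<subseteq> Fd \<inter> P3" using GP3 by auto
    qed
    ultimately show ?thesis using hFd3 claim by linarith
  qed
  have eR: "RR_r \<rho> (2 * \<alpha> * (real k + 1) * phi k \<delta> \<alpha>) P2 T = R"
    unfolding e2 RR_r_def R_def F2_def ..
  show ?thesis unfolding eR e8 using main by (simp add: G_def f_def t_def)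
qed

end
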